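(* Let $m\ge 4$, $t$, $g$ be positive integers with $t\ge g+1$, and put $\alpha=(t-1)-g$. Consider a bin configuration of the game $G(m,t,g)$ in which every current bin load is at most $t-1$. Suppose there are two distinct bins $A,B$ such that both of the following hold: 1. the sum of the loads of all bins other than $A$ and $B$ is at least $(m-2)g-2\alpha-1$; 2. there is a bin $C\notin\{A,B\}$ whose load is strictly less than $\alpha$. Then Algorithm wins from this configuration.
   Context: Bin stretching game $G(m,t,g)$: there are $m$ bins. In each round Adversary presents an item of positive integer size, and Algorithm then irrevocably places it into one of the $m$ bins. The load of a bin is the total size of the items in it. A bin configuration consists of: - the current loads $L_1,\dots,L_m$ of the bins, and - the multiset $\mathcal I$ of items presented so far, placed so that the bins have exactly these loads. "Algorithm wins from this configuration" means the following. There is an online rule which, given the configuration and the items presented so far, assigns each newly presented item to a bin. This rule must guarantee: for every finite sequence $e_1,\dots,e_j$ of further positive-integer items such that the multiset $\mathcal I\cup\{e_1,\dots,e_j\}$ can be partitioned into $m$ parts each of total size at most $g$, every bin load is at most $t-1$ after these items are placed. *)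

theory Defs
  imports Main "HOL-Library.Multiset"
begin

definition packable :: "nat \<Rightarrow> nat \<Rightarrow> nat multiset \<Rightarrow> bool" where
  "packable m g M \<longleftrightarrow>
     (\<exists>P :: nat \<Rightarrow> nat multiset. (\<Sum>i<m. P i) = M \<and> (\<forall>i<m. sum_mset (P i) \<le> g))"

definition bin_config :: "nat \<Rightarrow> (nat \<Rightarrow> nat) \<Rightarrow> nat multiset \<Rightarrow> bool" where
  "bin_config m L I \<longleftrightarrow> (\<forall>x\<in>#I. 0 < x) \<and>
     (\<exists>P :: nat \<Rightarrow> nat multiset. (\<Sum>i<m. P i) = I \<and> (\<forall>i<m. sum_mset (P i) = L i))"

text \<open>An online rule maps the list of further items presented so far (the last one being
  the item to place now) to a bin. Load of bin i after the further items es are placed.\<close>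
definition load_after :: "(nat \<Rightarrow> nat) \<Rightarrow> (nat list \<Rightarrow> nat) \<Rightarrow> nat list \<Rightarrow> nat \<Rightarrow> nat" where
  "load_after L rule es i =
     L i + (\<Sum>k<length es. if rule (take (Suc k) es) = i then es ! k else 0)"

definition algorithm_wins :: "nat \<Rightarrow> nat \<Rightarrow> nat \<Rightarrow> (nat \<Rightarrow> nat) \<Rightarrow> nat multiset \<Rightarrow> bool" where
  "algorithm_wins m t g L I \<longleftrightarrow>
     (\<exists>rule :: nat list \<Rightarrow> nat. (\<forall>es. rule es < m) \<and>
        (\<forall>es. (\<forall>e\<in>set es. 0 < e) \<and> packable m g (I + mset es) \<longrightarrow>
              (\<forall>i<m. load_after L rule es i \<le> t - 1)))"

end

theory Submission
  imports Defs
begin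

lemma sum_mset_sum_lt: fixes P :: "nat \<Rightarrow> nat multiset" and n :: nat shows "sum_mset (\<Sum>i<n. (P i :: nat multiset)) = (\<Sum>i<n. sum_mset (P i))"
  by (induction n) auto

lemma mem_sum_lt: fixes P :: "nat \<Rightarrow> nat multiset" and n :: nat shows "x \<in># (\<Sum>i<n. (P i :: nat multiset)) \<Longrightarrow> \<exists>i<n. x \<in># P i"
  by (induction n) (auto simp: less_Suc_eq)

lemma packable_bounds:
  assumes "packable m g M"
  shows "sum_mset M \<le> m * g" "\<And>x. x \<in># M \<Longrightarrow> x \<le> g"
proof -
  obtain P where P: "(\<Sum>i<m. P i) = M" "\<forall>i<m. sum_mset (P i) \<le> g"
    using assms unfolding packable_def by blast
  have "sum_mset M = (\<Sum>i<m. sum_mset (P i))" using P(1) sum_mset_sum_lt by metis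
  also have "\<dots> \<le> (\<Sum>i<m. g)" using P(2) by (intro sum_mono) auto
  finally show "sum_mset M \<le> m * g" by simp
  fix x assume "x \<in># M"
  then obtain i where "i < m" "x \<in># P i" using mem_sum_lt P(1) by metis
  then have "x \<le> sum_mset (P i)" by (simp add: sum_mset.remove)
  then show "x \<le> g" using P(2) \<open>i<m\<close> by fastforce
qed

definition stepf :: "nat \<Rightarrow> nat \<Rightarrow> nat \<times> nat \<times> nat \<Rightarrow> nat \<times> nat \<times> nat" where
  "stepf t x s = (case s of (a,b,c) \<Rightarrow> if a+x \<le> t-1 then (a+x,b,c)
      else if b+x \<le> t-1 then (a,b+x,c) else (a,b,c+x))"

definition choice :: "nat \<Rightarrow> nat \<Rightarrow> nat \<Rightarrow> nat \<Rightarrow> nat \<times> nat \<times> nat \<Rightarrow> nat \<Rightarrow> nat" where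
  "choice t A B C s x = (case s of (a,b,c) \<Rightarrow> if a+x \<le> t-1 then A
      else if b+x \<le> t-1 then B else C)"

definition ffrule :: "nat \<Rightarrow> nat \<Rightarrow> nat \<Rightarrow> nat \<Rightarrow> nat \<times> nat \<times> nat \<Rightarrow> nat list \<Rightarrow> nat" where
  "ffrule t A B C s0 es = (if es = [] then A
     else choice t A B C (fold (stepf t) (butlast es) s0) (last es))"

lemma load_after_snoc:
  "load_after L rule (es @ [x]) i = load_after L rule es i + (if rule (es @ [x]) = i then x else 0)"
proof -
  have "(\<Sum>k<length (es@[x]). if rule (take (Suc k) (es@[x])) = i then (es@[x]) ! k else 0)
      = (\<Sum>k<length es. if rule (take (Suc k) (es@[x])) = i then (es@[x]) ! k else 0)
        + (if rule (es @ [x]) = i then x else 0)"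
    by simp
  also have "(\<Sum>k<length es. if rule (take (Suc k) (es@[x])) = i then (es@[x]) ! k else 0)
      = (\<Sum>k<length es. if rule (take (Suc k) es) = i then es ! k else 0)"
    by (intro sum.cong) (auto simp: nth_append)
  finally show ?thesis unfolding load_after_def by simp
qed

lemma load_after_ff:
  assumes "A \<noteq> B" "A \<noteq> C" "B \<noteq> C"
  shows "load_after L (ffrule t A B C (L A, L B, L C)) es i =
    (let s = fold (stepf t) es (L A, L B, L C) in
     if i = A then fst s else if i = B then fst (snd s) else if i = C then snd (snd s) else L i)"
proof (induction es rule: rev_induct)
  case Nil
  then show ?case using assms by (simp add: load_after_def Let_def)
next
  case (snoc x es)
  obtain a b c where s: "fold (stepf t) es (L A, L B, L C) = (a,b,c)" by (metis prod.exhaust)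
  have f: "fold (stepf t) (es@[x]) (L A, L B, L C) = stepf t x (a,b,c)" using s by simp
  have r: "ffrule t A B C (L A,L B,L C) (es@[x]) = choice t A B C (a,b,c) x"
    using s by (simp add: ffrule_def)
  show ?case unfolding load_after_snoc f r snoc.IH s using assms
    by (simp add: stepf_def choice_def Let_def)
qed

lemma ff_invariant:
  assumes "\<forall>x\<in>set r. 0 < x \<and> x \<le> g"
    and "c0 + g \<le> t - 1"
    and "s = (a,b,c)"
    and "a \<le> t-1" "b \<le> t-1" "c \<le> t-1" "c0 \<le> c"
    and "c = c0 \<longrightarrow> a + b + sum_list r \<le> 2*t-1"
    and "c \<noteq> c0 \<longrightarrow> a + sum_list r \<le> t-1"
  shows "fst (fold (stepf t) r s) \<le> t-1 \<and> fst (snd (fold (stepf t) r s)) \<le> t-1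
       \<and> snd (snd (fold (stepf t) r s)) \<le> t-1"
  using assms
proof (induction r arbitrary: s a b c)
  case Nil
  then show ?case by simp
next
  case (Cons x r)
  have x: "0 < x" "x \<le> g" using Cons.prems(1) by auto
  show ?case
  proof (cases "a + x \<le> t-1")
    case True
    then have "stepf t x s = (a+x,b,c)" using Cons.prems by (simp add: stepf_def)
    then show ?thesis using Cons.prems True Cons.IH[of "(a+x,b,c)" "a+x" b c] by auto
  next
    case F1: False
    then have cc: "c = c0" using Cons.prems by auto
    show ?thesis
    proof (cases "b + x \<le> t-1")
      case True
      then have "stepf t x s = (a,b+x,c)" using Cons.prems F1 by (simp add: stepf_def)
      then show ?thesis using Cons.prems True cc Cons.IH[of "(a,b+x,c)" a "b+x" c] by auto
    next
      case False
      then have "stepf t x s = (a,b,c+x)" using Cons.prems F1 by (simp add: stepf_def)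
      then show ?thesis using Cons.prems False F1 cc x Cons.IH[of "(a,b,c+x)" a b "c+x"] by auto
    qed
  qed
qed

theorem mainTheorem2:
  fixes m t g :: nat and L :: "nat \<Rightarrow> nat" and I :: "nat multiset" and A B :: nat
  assumes "m \<ge> 4" and "t > 0" and "g > 0" and "t \<ge> g + 1"
    and "bin_config m L I"
    and "\<forall>i<m. L i \<le> t - 1"
    and "A < m" and "B < m" and "A \<noteq> B"
    and "int (\<Sum>i\<in>{..<m} - {A, B}. L i)
           \<ge> int (m - 2) * int g - 2 * (int (t - 1) - int g) - 1"
    and "\<exists>C<m. C \<noteq> A \<and> C \<noteq> B \<and> int (L C) < int (t - 1) - int g"
  shows "algorithm_wins m t g L I"
proof -
  obtain C where C: "C < m" "C \<noteq> A" "C \<noteq> B" "int (L C) < int (t - 1) - int g"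
    using assms(11) by blast
  obtain P where P: "(\<Sum>i<m. P i) = I" "\<forall>i<m. sum_mset (P i) = L i"
    using assms(5) unfolding bin_config_def by blast
  have sumI: "sum_mset I = (\<Sum>i<m. L i)"
    using sum_mset_sum_lt[of P m] P by simp
  have split: "(\<Sum>i<m. L i) = L A + L B + (\<Sum>i\<in>{..<m} - {A, B}. L i)"
  proof -
    have "(\<Sum>i<m. L i) = (\<Sum>i\<in>{A,B}. L i) + (\<Sum>i\<in>{..<m} - {A, B}. L i)"
      using assms(7,8) by (subst sum.subset_diff[of "{A,B}"]) auto
    then show ?thesis using assms(9) by simp
  qed
  define s0 where "s0 = (L A, L B, L C)"
  define rule where "rule = ffrule t A B C s0"
  have "\<forall>es. rule es < m"
    using assms(7,8) C(1) by (auto simp: rule_def ffrule_def choice_def split: prod.splits)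
  moreover have "\<forall>i<m. load_after L rule es i \<le> t - 1"
    if es: "\<forall>e\<in>set es. 0 < e" "packable m g (I + mset es)" for es
  proof -
    have pb1: "sum_mset (I + mset es) \<le> m * g" using packable_bounds(1)[OF es(2)] .
    have pb2: "\<forall>x\<in>set es. 0 < x \<and> x \<le> g"
      using packable_bounds(2)[OF es(2)] es(1) by auto
    have tot: "L A + L B + sum_list es \<le> 2*t-1"
    proof -
      have "int (L A + L B + sum_list es) + int (\<Sum>i\<in>{..<m} - {A, B}. L i) \<le> int (m * g)"
      proof -
        have "L A + L B + sum_list es + (\<Sum>i\<in>{..<m} - {A, B}. L i) \<le> m * g"
          using pb1 sumI split by (simp add: sum_mset_sum_list)
        then show ?thesis by (metis of_nat_add of_nat_le_iff)
      qed
      moreover have "int (m*g) = int (m-2) * int g + 2 * int g" using assms(1)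
        by (simp add: algebra_simps of_nat_diff flip: of_nat_mult)
      ultimately show ?thesis using assms(10) assms(2,4) by (simp add: of_nat_diff)
    qed
    have inv: "fst (fold (stepf t) es s0) \<le> t-1 \<and> fst (snd (fold (stepf t) es s0)) \<le> t-1
       \<and> snd (snd (fold (stepf t) es s0)) \<le> t-1"
      apply (rule ff_invariant[of es g "L C" t s0 "L A" "L B" "L C"])
      using pb2 C(4) assms(6,7,8) C(1) tot unfolding s0_def by auto
    show ?thesis
    proof (intro allI impI)
      fix i assume "i < m"
      then show "load_after L rule es i \<le> t - 1"
        using inv assms(6,9) C(2,3) load_after_ff[of A B C L t es i]
        unfolding rule_def s0_def by (auto simp: Let_def)
    qed
  qed
  ultimately show ?thesis unfolding algorithm_wins_def by blast
qed

end
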